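(* Consider the unknown polynomial system $\dot x=A_\star Z(x)+B_\star W(x)u$ with $x\in\mathbb{R}^n$, $u\in\mathbb{R}^m$, and data $\{\dot x^j,z^j,v^j\}_{j=0}^{T-1}$ generated by $\dot x^j=A_\star z^j+B_\star v^j+d^j$, where the unknown disturbance samples satisfy $|d^j|^2\le\omega$ for all $j=0,\dots,T-1$, for a known $\omega\ge 0$. Let $\epsilon>0$. Assume that there exist a symmetric $A_{\mathrm{i}}\in\mathbb{R}^{p\times p}$, $B_{\mathrm{i}}\in\mathbb{R}^{p\times n}$ and $\tau_0,\dots,\tau_{T-1}$ satisfying the constraints $$\begin{bmatrix}-I-\sum_{j}\tau_jc_j & B_{\mathrm{i}}^\top-\sum_{j}\tau_jb_j^\top & B_{\mathrm{i}}^\top\\ B_{\mathrm{i}}-\sum_{j}\tau_jb_j & A_{\mathrm{i}}-\sum_{j}\tau_ja_j & 0\\ B_{\mathrm{i}} & 0 & -A_{\mathrm{i}}\end{bmatrix}\preceq 0,\quad A_{\mathrm{i}}\succ 0,\quad \tau_j\ge0,$$ (sums over $j=0,\dots,T-1$), and set $\bar\zeta:=-A_{\mathrm{i}}^{-1}B_{\mathrm{i}}\in\mathbb{R}^{p\times n}$, $\bar P:=A_{\mathrm{i}}^{-1/2}$, $\bar Q:=I_n$. Assume there exist polynomials $\ell,\eta,h:\mathbb{R}^n\to\mathbb{R}$ and a polynomial $K:\mathbb{R}^n\to\mathbb{R}^m$ such that for all $x\in\mathbb{R}^n$, $\eta(x)>0$ and $H(x)\preceq0$, where $$H(x):=\begin{bmatrix}\ell(x)h(x)+\epsilon+\frac{\partial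 h}{\partial x}(x)\,\bar\zeta^\top\begin{bmatrix}Z(x)\\ W(x)K(x)\end{bmatrix} & \star & \star\\ \eta(x)\bar P\begin{bmatrix}Z(x)\\ W(x)K(x)\end{bmatrix} & -2\eta(x)I_p & \star\\ \bar Q^{1/2}\frac{\partial h}{\partial x}(x)^\top & 0 & -2\eta(x)I_n\end{bmatrix}\in\mathbb{R}^{(1+p+n)\times(1+p+n)}.$$ Then the set $\mathcal{I}:=\{x\in\mathbb{R}^n: h(x)\le0\}$ is invariant for the closed-loop system $\dot x=A_\star Z(x)+B_\star W(x)K(x)$.
   Context: $A_\star\in\mathbb{R}^{n\times N_A}$, $B_\star\in\mathbb{R}^{n\times N_B}$ are unknown constant matrices; $Z:\mathbb{R}^n\to\mathbb{R}^{N_A}$ is a known vector of monomials and $W:\mathbb{R}^n\to\mathbb{R}^{N_B\times m}$ a known matrix of monomials; $p:=N_A+N_B$. The data are $z^j=Z(x^j)$, $v^j=W(x^j)u^j$ for sampled states $x^j$ and inputs $u^j$, and $\dot x^j$ the sampled state derivative. Define $c_j:=-\omega I_n+\dot x^j(\dot x^j)^\top$, $b_j:=-\begin{bmatrix}z^j\\ v^j\end{bmatrix}(\dot x^j)^\top$, $a_j:=\begin{bmatrix}z^j\\ v^j\end{bmatrix}\begin{bmatrix}z^j\\ v^j\end{bmatrix}^\top$. $\star$ denotes blocks determined by symmetry; $M^{1/2}$ is the positive semidefinite square root; $\frac{\partial h}{\partial x}(x)$ is the gradient as a row vector. A set $\mathcal{I}$ is invariant for $\dot x=a(x)$ ($a$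 polynomial) if every maximal solution starting in $\mathcal{I}$ remains in $\mathcal{I}$ on its whole interval of existence $[0,T(x_0))$. *)

theory Defs
  imports "HOL-Analysis.Analysis"
begin

inductive poly_fun :: "(real^'n \<Rightarrow> real) \<Rightarrow> bool" where
  pf_const: "poly_fun (\<lambda>x. c)"
| pf_coord: "poly_fun (\<lambda>x. x $ i)"
| pf_add: "poly_fun f \<Longrightarrow> poly_fun g \<Longrightarrow> poly_fun (\<lambda>x. f x + g x)"
| pf_mult: "poly_fun f \<Longrightarrow> poly_fun g \<Longrightarrow> poly_fun (\<lambda>x. f x * g x)"

definition poly_vec :: "(real^'n \<Rightarrow> real^'k) \<Rightarrow> bool" where
  "poly_vec F \<longleftrightarrow> (\<forall>i. poly_fun (\<lambda>x. F x $ i))"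

definition poly_mat :: "(real^'n \<Rightarrow> real^'c^'r) \<Rightarrow> bool" where
  "poly_mat F \<longleftrightarrow> (\<forall>i j. poly_fun (\<lambda>x. F x $ i $ j))"

definition nsd :: "real^'a^'a \<Rightarrow> bool" where
  "nsd M \<longleftrightarrow> (\<forall>v. v \<bullet> (M *v v) \<le> 0)"

definition psd :: "real^'a^'a \<Rightarrow> bool" where
  "psd M \<longleftrightarrow> (\<forall>v. v \<bullet> (M *v v) \<ge> 0)"

definition pd :: "real^'a^'a \<Rightarrow> bool" where
  "pd M \<longleftrightarrow> (\<forall>v. v \<noteq> 0 \<longrightarrow> v \<bullet> (M *v v) > 0)"

definition symmetric_mat :: "real^'a^'a \<Rightarrow> bool" where
  "symmetric_mat M \<longleftrightarrow> transpose M = M"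

definition psd_sqrt :: "real^'a^'a \<Rightarrow> real^'a^'a" where
  "psd_sqrt M = (THE S. symmetric_mat S \<and> psd S \<and> S ** S = M)"

definition outer :: "real^'a \<Rightarrow> real^'b \<Rightarrow> real^'b^'a" where
  "outer a b = (\<chi> i j. a $ i * b $ j)"

definition vconcat :: "real^'a \<Rightarrow> real^'b \<Rightarrow> real^('a + 'b)" where
  "vconcat a b = (\<chi> i. case i of Inl k \<Rightarrow> a $ k | Inr k \<Rightarrow> b $ k)"

definition block3 ::
  "real^'a^'a \<Rightarrow> real^'b^'a \<Rightarrow> real^'c^'a \<Rightarrow>
   real^'a^'b \<Rightarrow> real^'b^'b \<Rightarrow> real^'c^'b \<Rightarrow>
   real^'a^'c \<Rightarrow> real^'b^'c \<Rightarrow> real^'c^'c \<Rightarrow> real^('a + ('b + 'c))^('a + ('b + 'c))" where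
  "block3 M11 M12 M13 M21 M22 M23 M31 M32 M33 =
     (\<chi> i j. case i of
        Inl r \<Rightarrow> (case j of Inl c \<Rightarrow> M11 $ r $ c | Inr (Inl c) \<Rightarrow> M12 $ r $ c | Inr (Inr c) \<Rightarrow> M13 $ r $ c)
      | Inr (Inl r) \<Rightarrow> (case j of Inl c \<Rightarrow> M21 $ r $ c | Inr (Inl c) \<Rightarrow> M22 $ r $ c | Inr (Inr c) \<Rightarrow> M23 $ r $ c)
      | Inr (Inr r) \<Rightarrow> (case j of Inl c \<Rightarrow> M31 $ r $ c | Inr (Inl c) \<Rightarrow> M32 $ r $ c | Inr (Inr c) \<Rightarrow> M33 $ r $ c))"

definition col :: "real^'k \<Rightarrow> real^unit^'k" where
  "col v = (\<chi> i j. v $ i)"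

definition grad :: "(real^'n \<Rightarrow> real) \<Rightarrow> real^'n \<Rightarrow> real^'n" where
  "grad h x = (\<chi> i. frechet_derivative h (at x) (axis i 1))"

definition sol_dom :: "ereal \<Rightarrow> real set" where
  "sol_dom Tm = {t. 0 \<le> t \<and> ereal t < Tm}"

definition is_solution :: "(real^'n \<Rightarrow> real^'n) \<Rightarrow> real^'n \<Rightarrow> ereal \<Rightarrow> (real \<Rightarrow> real^'n) \<Rightarrow> bool" where
  "is_solution a x0 Tm X \<longleftrightarrow> 0 < Tm \<and> X 0 = x0 \<and>
     (\<forall>t \<in> sol_dom Tm. (X has_vector_derivative a (X t)) (at t within sol_dom Tm))"

definition is_maximal_solution :: "(real^'n \<Rightarrow> real^'n) \<Rightarrow> real^'n \<Rightarrow> ereal \<Rightarrow> (real \<Rightarrow> real^'n) \<Rightarrow> bool" where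
  "is_maximal_solution a x0 Tm X \<longleftrightarrow> is_solution a x0 Tm X \<and>
     \<not> (\<exists>T' Y. Tm < T' \<and> is_solution a x0 T' Y \<and> (\<forall>t \<in> sol_dom Tm. Y t = X t))"

definition invariant :: "(real^'n \<Rightarrow> real^'n) \<Rightarrow> (real^'n) set \<Rightarrow> bool" where
  "invariant a S \<longleftrightarrow> (\<forall>x0 \<in> S. \<forall>Tm X. is_maximal_solution a x0 Tm X \<longrightarrow> (\<forall>t \<in> sol_dom Tm. X t \<in> S))"

end

theory Submission
  imports Defs
begin


lemma sym_inner:
  fixes M :: "real^'k^'k"
  assumes "symmetric_mat M"
  shows "(M *v x) \<bullet> y = x \<bullet> (M *v y)"
proof -
  have "(x v* M) \<bullet> y = x \<bullet> (M *v y)" by (rule dot_lmul_matrix)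
  moreover have "x v* M = M *v x"
    using assms unfolding symmetric_mat_def
    by (metis transpose_matrix_vector)
  ultimately show ?thesis by simp
qed

lemma symI:
  fixes M :: "real^'k^'k"
  assumes "\<And>x y. (M *v x) \<bullet> y = x \<bullet> (M *v y)"
  shows "symmetric_mat M"
  unfolding symmetric_mat_def matrix_eq
proof
  fix x
  have "\<And>y. (x v* M) \<bullet> y = (M *v x) \<bullet> y" using assms dot_lmul_matrix by metis
  then have "(x v* M - M *v x) \<bullet> (x v* M - M *v x) = 0" by (simp add: inner_diff_left)
  then show "transpose M *v x = M *v x" by simp
qed

lemma quad_zero:
  fixes a c :: real
  assumes "\<And>t. 2*t*a + t\<^sup>2*c \<le> 0"
  shows "a = 0"
proof -
  define C where "C = \<bar>c\<bar>+1"
  define t where "t = a / C"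
  have p: "C > 0" by (simp add: C_def)
  have "2*t*a + t\<^sup>2*c \<le> 0" by (rule assms)
  then have "(2*t*a + t\<^sup>2*c) * C\<^sup>2 \<le> 0"
    by (simp add: mult_nonpos_nonneg)
  moreover have "(2*t*a + t\<^sup>2*c) * C\<^sup>2 = a\<^sup>2 * (2*C+c)"
    using p unfolding t_def by (simp add: field_simps power2_eq_square)
  ultimately have "a\<^sup>2 * (2*C+c) \<le> 0" by simp
  moreover have "2*C+c > 0" unfolding C_def by (cases "c \<ge> 0") auto
  ultimately have "a\<^sup>2 \<le> 0" by (simp add: mult_le_0_iff)
  then show ?thesis by simp
qed

lemma orth_coeff:
  fixes B :: "(real^'k) set"
  assumes "finite B" "\<forall>b\<in>B. norm b = 1" "\<forall>b\<in>B. \<forall>c\<in>B. b \<noteq> c \<longrightarrow> b \<bullet> c = 0" "c \<in> B"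
  shows "c \<bullet> (\<Sum>b\<in>B. \<alpha> b *\<^sub>R b) = \<alpha> c"
proof -
  have "c \<bullet> (\<Sum>b\<in>B. \<alpha> b *\<^sub>R b) = (\<Sum>b\<in>B. \<alpha> b * (c \<bullet> b))"
    by (simp add: inner_sum_right)
  also have "\<dots> = (\<Sum>b\<in>B. if b = c then \<alpha> b else 0)"
    apply (rule sum.cong, simp)
    using assms by (auto simp: inner_commute dot_square_norm)
  also have "\<dots> = \<alpha> c" using assms by simp
  finally show ?thesis .
qed

lemma spectral:
  fixes M :: "real^'k^'k"
  assumes sym: "symmetric_mat M"
  shows "\<exists>B. finite B \<and> (\<forall>b\<in>B. norm b = 1 \<and> M *v b = (b \<bullet> (M *v b)) *\<^sub>R b)
       \<and> (\<forall>b\<in>B. \<forall>c\<in>B. b \<noteq> c \<longrightarrow> b \<bullet> c = 0) \<and> (\<forall>x. x = (\<Sum>b\<in>B. (b \<bullet> x) *\<^sub>R b))"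
proof -
  define P where "P B \<longleftrightarrow> finite B \<and> (\<forall>b\<in>B. norm b = 1 \<and> M *v b = (b \<bullet> (M *v b)) *\<^sub>R b)
       \<and> (\<forall>b\<in>B. \<forall>c\<in>B. b \<noteq> c \<longrightarrow> b \<bullet> c = 0)" for B :: "(real^'k) set"
  have P0: "P {}" by (simp add: P_def)
  have bnd: "\<forall>B. P B \<longrightarrow> card B < DIM(real^'k) + 1"
  proof (intro allI impI)
    fix B assume "P B"
    then have "pairwise orthogonal B" "0 \<notin> B"
      unfolding P_def pairwise_def orthogonal_def by auto
    then have "independent B" by (rule pairwise_orthogonal_independent)
    then show "card B < DIM(real^'k) + 1" using independent_bound by fastforce
  qed
  obtain B where PB: "P B" and maxB: "\<And>C. P C \<Longrightarrow> card C \<le> card B"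
    using ex_has_greatest_nat[of P "{}" card, OF P0 bnd] by blast
  have fin: "finite B" and eig: "\<forall>b\<in>B. norm b = 1 \<and> M *v b = (b \<bullet> (M *v b)) *\<^sub>R b"
    and orth: "\<forall>b\<in>B. \<forall>c\<in>B. b \<noteq> c \<longrightarrow> b \<bullet> c = 0" using PB by (auto simp: P_def)
  have "x = (\<Sum>b\<in>B. (b \<bullet> x) *\<^sub>R b)" for x
  proof (rule ccontr)
    assume ne: "x \<noteq> (\<Sum>b\<in>B. (b \<bullet> x) *\<^sub>R b)"
    define e where "e = x - (\<Sum>b\<in>B. (b \<bullet> x) *\<^sub>R b)"
    have enz: "e \<noteq> 0" using ne by (simp add: e_def)
    have eorth: "\<forall>c\<in>B. c \<bullet> e = 0"
      using orth_coeff[OF fin _ orth] eig by (simp add: e_def inner_diff_right)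
    define K where "K = {w::real^'k. (\<forall>b\<in>B. b \<bullet> w = 0) \<and> norm w = 1}"
    have "e /\<^sub>R norm e \<in> K" using enz eorth by (simp add: K_def)
    then have Kne: "K \<noteq> {}" by blast
    have "K = (\<Inter>b\<in>B. {w. b \<bullet> w = 0}) \<inter> {w. norm w = 1}" by (auto simp: K_def)
    moreover have "closed ((\<Inter>b\<in>B. {w::real^'k. b \<bullet> w = 0}) \<inter> {w. norm w = 1})"
      by (intro closed_Int closed_INT ballI closed_Collect_eq continuous_intros)
    ultimately have "closed K" by simp
    moreover have "bounded K" unfolding K_def bounded_iff by auto
    ultimately have "compact K" by (simp add: compact_eq_bounded_closed)
    moreover have "continuous_on K (\<lambda>w. w \<bullet> (M *v w))"
      by (intro continuous_intros linear_continuous_on matrix_vector_mul_bounded_linear)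
    ultimately obtain v where vK: "v \<in> K" and vmax: "\<And>w. w \<in> K \<Longrightarrow> w \<bullet> (M *v w) \<le> v \<bullet> (M *v v)"
      using continuous_attains_sup[OF _ Kne] by blast
    define l where "l = v \<bullet> (M *v v)"
    have vS: "\<forall>b\<in>B. b \<bullet> v = 0" and vn: "norm v = 1" using vK by (auto simp: K_def)
    have inv: "\<forall>b\<in>B. b \<bullet> (M *v w) = 0" if "\<forall>b\<in>B. b \<bullet> w = 0" for w
    proof
      fix b assume b: "b \<in> B"
      have "b \<bullet> (M *v w) = (M *v b) \<bullet> w" by (simp add: sym_inner[OF sym])
      also have "\<dots> = 0" using eig b that by (metis inner_scaleR_left mult_zero_right)
      finally show "b \<bullet> (M *v w) = 0" .
    qed
    have lag: "w \<bullet> (M *v v) = 0" if wS: "\<forall>b\<in>B. b \<bullet> w = 0" and wv: "v \<bullet> w = 0" for w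
    proof (rule quad_zero[where c = "w \<bullet> (M *v w) - l * (w \<bullet> w)"])
      fix t :: real
      define u where "u = v + t *\<^sub>R w"
      have uS: "\<forall>b\<in>B. b \<bullet> u = 0" using wS vS by (simp add: u_def inner_add_right)
      have vv: "v \<bullet> v = 1" using vn by (simp add: dot_square_norm)
      have uu: "u \<bullet> u = 1 + t\<^sup>2 * (w \<bullet> w)"
        using vv wv by (simp add: u_def inner_add_left inner_add_right inner_commute power2_eq_square)
      have upos: "u \<bullet> u > 0" unfolding uu by (simp add: add_pos_nonneg)
      then have "norm u > 0" by (simp add: dot_square_norm)
      then have "u /\<^sub>R norm u \<in> K" using uS by (simp add: K_def)
      then have "(u /\<^sub>R norm u) \<bullet> (M *v (u /\<^sub>R norm u)) \<le> l" using vmax l_def by blast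
      moreover have "(u /\<^sub>R norm u) \<bullet> (M *v (u /\<^sub>R norm u)) = (u \<bullet> (M *v u)) / (u \<bullet> u)"
        by (simp add: matrix_vector_mult_scaleR dot_square_norm power2_eq_square divide_inverse inverse_mult_distrib mult_ac)
      ultimately have "u \<bullet> (M *v u) \<le> l * (u \<bullet> u)" using upos by (simp add: divide_le_eq)
      moreover have "v \<bullet> (M *v w) = w \<bullet> (M *v v)"
        using sym_inner[OF sym, of v w] by (simp add: inner_commute)
      moreover have "u \<bullet> (M *v u) = l + 2*t*(w \<bullet> (M *v v)) + t\<^sup>2 * (w \<bullet> (M *v w))"
        using \<open>v \<bullet> (M *v w) = w \<bullet> (M *v v)\<close>
        by (simp add: u_def l_def matrix_vector_right_distrib matrix_vector_mult_scaleR
              inner_add_left inner_add_right power2_eq_square algebra_simps)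
      ultimately show "2*t*(w \<bullet> (M *v v)) + t\<^sup>2 * (w \<bullet> (M *v w) - l * (w \<bullet> w)) \<le> 0"
        unfolding uu by (simp add: algebra_simps)
    qed
    define e' where "e' = M *v v - l *\<^sub>R v"
    have e'S: "\<forall>b\<in>B. b \<bullet> e' = 0" using inv[OF vS] vS by (simp add: e'_def inner_diff_right)
    have vv: "v \<bullet> v = 1" using vn by (simp add: dot_square_norm)
    have "v \<bullet> e' = 0" using vv by (simp add: e'_def l_def inner_diff_right)
    then have "e' \<bullet> (M *v v) = 0" using lag[OF e'S] by simp
    moreover have "e' \<bullet> (M *v v) = e' \<bullet> e' + l * (e' \<bullet> v)"
      by (simp add: e'_def inner_diff_right inner_diff_left algebra_simps)
    ultimately have "e' = 0" using \<open>v \<bullet> e' = 0\<close> by (simp add: inner_commute)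
    then have Mv: "M *v v = l *\<^sub>R v" by (simp add: e'_def)
    have vnB: "v \<notin> B" using vS vv by auto
    have "P (insert v B)"
      using PB vn Mv vS vnB unfolding P_def l_def by (auto simp: inner_commute)
    then have "card (insert v B) \<le> card B" by (rule maxB)
    then show False using vnB fin by simp
  qed
  then show ?thesis using fin eig orth by blast
qed

lemma outer_mv: "outer a b *v x = (b \<bullet> x) *\<^sub>R a"
  by (simp add: outer_def matrix_vector_mult_def vec_eq_iff inner_vec_def sum_distrib_left mult_ac)

lemma sum_mv: "(\<Sum>j\<in>S. f j) *v (x::real^'c) = (\<Sum>j\<in>S. f j *v x)"
  by (induction S rule: infinite_finite_induct) (auto simp: matrix_vector_mult_add_rdistrib)

lemma scaleR_mv: "(c *\<^sub>R A) *v (x::real^'c) = c *\<^sub>R (A *v x)"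
  by (simp add: matrix_vector_mult_def vec_eq_iff sum_distrib_left mult_ac)

lemma mv_sum: "(A::real^'c^'r) *v (\<Sum>j\<in>S. f j) = (\<Sum>j\<in>S. A *v f j)"
  by (induction S rule: infinite_finite_induct) (auto simp: matrix_vector_right_distrib)

lemma psd_sqrt_props:
  fixes M :: "real^'k^'k"
  assumes sym: "symmetric_mat M" and psdM: "psd M"
  shows "symmetric_mat (psd_sqrt M) \<and> psd (psd_sqrt M) \<and> psd_sqrt M ** psd_sqrt M = M"
proof -
  obtain B where fin: "finite B" and eig: "\<forall>b\<in>B. norm b = 1 \<and> M *v b = (b \<bullet> (M *v b)) *\<^sub>R b"
    and orth: "\<forall>b\<in>B. \<forall>c\<in>B. b \<noteq> c \<longrightarrow> b \<bullet> c = 0"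
    and exp: "\<And>x. x = (\<Sum>b\<in>B. (b \<bullet> x) *\<^sub>R b)"
    using spectral[OF sym] by blast
  have nrm: "\<forall>b\<in>B. norm b = 1" using eig by blast
  define lam where "lam b = b \<bullet> (M *v b)" for b
  have lam0: "lam b \<ge> 0" for b using psdM by (simp add: psd_def lam_def)
  have Mb: "M *v b = lam b *\<^sub>R b" if "b \<in> B" for b using eig that by (simp add: lam_def)
  define S where "S = (\<Sum>b\<in>B. sqrt (lam b) *\<^sub>R outer b b)"
  have Sx: "S *v x = (\<Sum>b\<in>B. (sqrt (lam b) * (b \<bullet> x)) *\<^sub>R b)" for x
    by (simp add: S_def sum_mv scaleR_mv outer_mv)
  have Mx: "M *v x = (\<Sum>b\<in>B. (lam b * (b \<bullet> x)) *\<^sub>R b)" for x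
  proof -
    have "M *v x = M *v (\<Sum>b\<in>B. (b \<bullet> x) *\<^sub>R b)" using exp[of x] by simp
    also have "\<dots> = (\<Sum>b\<in>B. (lam b * (b \<bullet> x)) *\<^sub>R b)"
      by (simp add: mv_sum matrix_vector_mult_scaleR Mb mult.commute)
    finally show ?thesis .
  qed
  have coeff: "c \<bullet> (\<Sum>b\<in>B. \<alpha> b *\<^sub>R b) = \<alpha> c" if "c \<in> B" for c \<alpha>
    using orth_coeff[OF fin nrm orth that] .
  have Ssym: "symmetric_mat S"
  proof (rule symI)
    fix x y
    show "(S *v x) \<bullet> y = x \<bullet> (S *v y)"
      by (simp add: Sx inner_sum_left inner_sum_right inner_commute mult_ac)
  qed
  have Spsd: "psd S"
    unfolding psd_def
  proof
    fix v
    have "v \<bullet> (S *v v) = (\<Sum>b\<in>B. sqrt (lam b) * (b \<bullet> v)\<^sup>2)"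
      by (simp add: Sx inner_sum_right inner_commute power2_eq_square mult_ac)
    also have "\<dots> \<ge> 0" by (intro sum_nonneg) (simp add: lam0)
    finally show "v \<bullet> (S *v v) \<ge> 0" .
  qed
  have SS: "S ** S = M"
    unfolding matrix_eq
  proof
    fix x
    have "(S ** S) *v x = S *v (S *v x)" by (simp add: matrix_vector_mul_assoc)
    also have "\<dots> = (\<Sum>b\<in>B. (sqrt (lam b) * (b \<bullet> (S *v x))) *\<^sub>R b)" by (rule Sx)
    also have "\<dots> = (\<Sum>b\<in>B. (lam b * (b \<bullet> x)) *\<^sub>R b)"
    proof (rule sum.cong[OF refl])
      fix b assume b: "b \<in> B"
      have "b \<bullet> (S *v x) = sqrt (lam b) * (b \<bullet> x)" unfolding Sx by (rule coeff[OF b])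
      then show "(sqrt (lam b) * (b \<bullet> (S *v x))) *\<^sub>R b = (lam b * (b \<bullet> x)) *\<^sub>R b"
        using lam0[of b] by (simp add: mult.assoc[symmetric])
    qed
    also have "\<dots> = M *v x" by (simp add: Mx)
    finally show "(S ** S) *v x = M *v x" .
  qed
  have uniq: "R = S" if Rs: "symmetric_mat R" and Rp: "psd R" and RR: "R ** R = M" for R
  proof -
    have Rb: "R *v b = sqrt (lam b) *\<^sub>R b" if b: "b \<in> B" for b
    proof (cases "lam b = 0")
      case True
      have "R *v (R *v b) = 0" using RR Mb[OF b] True by (simp add: matrix_vector_mul_assoc)
      then have "(R *v b) \<bullet> (R *v b) = 0" using sym_inner[OF Rs, of b "R *v b"] by simp
      then show ?thesis using True by simp
    next
      case False
      then have lp: "lam b > 0" using lam0[of b] by simp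
      define e where "e = R *v b - sqrt (lam b) *\<^sub>R b"
      have "R *v (R *v b) = lam b *\<^sub>R b" using RR Mb[OF b] by (simp add: matrix_vector_mul_assoc)
      then have "R *v e = - sqrt (lam b) *\<^sub>R e"
        using lam0[of b] by (simp add: e_def matrix_vector_mult_diff_distrib matrix_vector_mult_scaleR
            algebra_simps)
      then have "e \<bullet> (R *v e) = - sqrt (lam b) * (e \<bullet> e)" by simp
      moreover have "e \<bullet> (R *v e) \<ge> 0" using Rp by (simp add: psd_def)
      ultimately have "sqrt (lam b) * (e \<bullet> e) \<le> 0" by simp
      moreover have "sqrt (lam b) > 0" using lp by simp
      ultimately have "e \<bullet> e \<le> 0" by (simp add: mult_le_0_iff)
      then have "e = 0" by (metis inner_ge_zero inner_eq_zero_iff order_antisym)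
      then show ?thesis by (simp add: e_def)
    qed
    show ?thesis unfolding matrix_eq
    proof
      fix x
      have "R *v x = R *v (\<Sum>b\<in>B. (b \<bullet> x) *\<^sub>R b)" using exp[of x] by simp
      also have "\<dots> = (\<Sum>b\<in>B. (sqrt (lam b) * (b \<bullet> x)) *\<^sub>R b)"
        by (simp add: mv_sum matrix_vector_mult_scaleR Rb mult_ac)
      also have "\<dots> = S *v x" by (simp add: Sx)
      finally show "R *v x = S *v x" .
    qed
  qed
  have "psd_sqrt M = S"
    unfolding psd_sqrt_def
    using Ssym Spsd SS uniq by blast
  then show ?thesis using Ssym Spsd SS by simp
qed



lemma sumU: "(\<Sum>i\<in>(UNIV::('a::finite+'b::finite) set). g i) = (\<Sum>i\<in>UNIV. g (Inl i)) + (\<Sum>i\<in>UNIV. g (Inr i))"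
proof -
  have "sum g (UNIV <+> UNIV) = sum (g \<circ> Inl) UNIV + sum (g \<circ> Inr) UNIV" by (rule sum.Plus) auto
  then show ?thesis by simp
qed

lemma vconcat_inner: "vconcat a b \<bullet> vconcat c d = a \<bullet> c + b \<bullet> d"
  by (simp add: inner_vec_def sumU vconcat_def)

lemma block3_mv: "block3 M11 M12 M13 M21 M22 M23 M31 M32 M33 *v vconcat a (vconcat b c) =
   vconcat (M11 *v a + M12 *v b + M13 *v c) (vconcat (M21 *v a + M22 *v b + M23 *v c) (M31 *v a + M32 *v b + M33 *v c))"
  by (auto simp: vec_eq_iff block3_def vconcat_def matrix_vector_mult_def sumU split: sum.split)

lemma block3_quad: "vconcat a (vconcat b c) \<bullet> (block3 M11 M12 M13 M21 M22 M23 M31 M32 M33 *v vconcat a (vconcat b c))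
  = a \<bullet> (M11 *v a) + a \<bullet> (M12 *v b) + a \<bullet> (M13 *v c) + b \<bullet> (M21 *v a) + b \<bullet> (M22 *v b) + b \<bullet> (M23 *v c)
   + c \<bullet> (M31 *v a) + c \<bullet> (M32 *v b) + c \<bullet> (M33 *v c)"
  by (simp add: block3_mv vconcat_inner inner_add_right)

lemma neg_mv: "(- A) *v (x::real^'c) = - (A *v x)"
  by (simp add: matrix_vector_mult_def vec_eq_iff sum_negf)

lemma transpose_outer: "transpose (outer a b) = outer b a"
  by (simp add: outer_def transpose_def vec_eq_iff)

lemma transpose_mv_inner: "x \<bullet> (transpose (A::real^'c^'r) *v c) = (A *v x) \<bullet> c"
  by (metis dot_lmul_matrix inner_commute transpose_matrix_vector)

lemma Ms_mv:
  "(\<chi> i k. case k of Inl a \<Rightarrow> (Astar::real^'na^'n) $ i $ a | Inr b \<Rightarrow> (Bstar::real^'nb^'n) $ i $ b) *v vconcat p q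
    = Astar *v p + Bstar *v q"
  by (simp add: vec_eq_iff matrix_vector_mult_def vconcat_def sumU)

lemma unit_sum: "(\<Sum>i\<in>(UNIV::unit set). g i) = g ()"
  by (simp add: UNIV_unit)

lemma col_mv: "col p *v (e::real^unit) = (e $ ()) *\<^sub>R p"
  by (simp add: col_def matrix_vector_mult_def vec_eq_iff unit_sum mult.commute)

lemma tcol_mv: "transpose (col p) *v a = (\<chi> _. p \<bullet> a)"
  by (simp add: col_def transpose_def matrix_vector_mult_def vec_eq_iff inner_vec_def)

lemma unit_inner: "(e::real^unit) \<bullet> f = e $ () * f $ ()"
  by (simp add: inner_vec_def unit_sum)

lemma unit_mv: "(M::real^unit^unit) *v e = (\<chi> _. M $ () $ () * e $ ())"
  by (simp add: matrix_vector_mult_def vec_eq_iff unit_sum)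



lemma transpose_neg: "transpose (- (A::real^'c^'r)) = - transpose A"
  by (simp add: transpose_def vec_eq_iff)

lemma LMI_cons:
  fixes Ai Ainv :: "real^'p^'p" and Bi :: "real^'n^'p" and Ms :: "real^'p^'n"
    and w :: "nat \<Rightarrow> real^'p" and xd d :: "nat \<Rightarrow> real^'n"
  assumes Ai_sym: "symmetric_mat Ai"
    and LMI: "nsd (block3
        (- mat 1 - (\<Sum>j<T. \<tau> j *\<^sub>R (- \<omega> *\<^sub>R mat 1 + outer (xd j) (xd j))))
        (transpose Bi - (\<Sum>j<T. \<tau> j *\<^sub>R transpose (- outer (w j) (xd j))))
        (transpose Bi)
        (Bi - (\<Sum>j<T. \<tau> j *\<^sub>R (- outer (w j) (xd j))))
        (Ai - (\<Sum>j<T. \<tau> j *\<^sub>R outer (w j) (w j)))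
        0
        Bi
        0
        (- Ai))"
    and tau: "\<forall>j<T. \<tau> j \<ge> 0"
    and Msw: "\<forall>j<T. Ms *v w j = xd j - d j"
    and dist: "\<forall>j<T. (norm (d j))\<^sup>2 \<le> \<omega>"
    and AA: "\<And>y. Ai *v (Ainv *v y) = y"
  shows "(transpose Ms *v x + Ainv *v (Bi *v x)) \<bullet> (Ai *v (transpose Ms *v x + Ainv *v (Bi *v x))) \<le> x \<bullet> x"
proof -
  define b where "b = transpose Ms *v x"
  define c where "c = Ainv *v (Bi *v x)"
  define p where "p j = xd j \<bullet> x" for j
  define q where "q j = w j \<bullet> b" for j
  define X where "X = x \<bullet> x"
  have Bc: "Bi *v x = Ai *v c" by (simp add: c_def AA)
  have "vconcat x (vconcat b c) \<bullet> ((block3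
        (- mat 1 - (\<Sum>j<T. \<tau> j *\<^sub>R (- \<omega> *\<^sub>R mat 1 + outer (xd j) (xd j))))
        (transpose Bi - (\<Sum>j<T. \<tau> j *\<^sub>R transpose (- outer (w j) (xd j))))
        (transpose Bi)
        (Bi - (\<Sum>j<T. \<tau> j *\<^sub>R (- outer (w j) (xd j))))
        (Ai - (\<Sum>j<T. \<tau> j *\<^sub>R outer (w j) (w j)))
        0
        Bi
        0
        (- Ai)) *v vconcat x (vconcat b c)) \<le> 0"
    using LMI by (simp add: nsd_def)
  then have main: "x \<bullet> ((- mat 1 - (\<Sum>j<T. \<tau> j *\<^sub>R (- \<omega> *\<^sub>R mat 1 + outer (xd j) (xd j)))) *v x)
     + x \<bullet> ((transpose Bi - (\<Sum>j<T. \<tau> j *\<^sub>R transpose (- outer (w j) (xd j)))) *v b)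
     + x \<bullet> (transpose Bi *v c)
     + b \<bullet> ((Bi - (\<Sum>j<T. \<tau> j *\<^sub>R (- outer (w j) (xd j)))) *v x)
     + b \<bullet> ((Ai - (\<Sum>j<T. \<tau> j *\<^sub>R outer (w j) (w j))) *v b)
     + c \<bullet> (Bi *v x) + c \<bullet> ((- Ai) *v c) \<le> 0"
    by (simp add: block3_quad)
  have t1: "x \<bullet> ((- mat 1 - (\<Sum>j<T. \<tau> j *\<^sub>R (- \<omega> *\<^sub>R mat 1 + outer (xd j) (xd j)))) *v x)
      = - X - (\<Sum>j<T. \<tau> j * (- \<omega> * X + (p j)\<^sup>2))"
    by (simp add: matrix_vector_mult_diff_rdistrib neg_mv sum_mv scaleR_mv matrix_vector_mult_add_rdistrib
        outer_mv inner_diff_right inner_sum_right inner_add_right X_def p_def power2_eq_square inner_commute)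
  have t2: "x \<bullet> ((transpose Bi - (\<Sum>j<T. \<tau> j *\<^sub>R transpose (- outer (w j) (xd j)))) *v b)
      = (Bi *v x) \<bullet> b + (\<Sum>j<T. \<tau> j * (p j * q j))"
    by (simp add: matrix_vector_mult_diff_rdistrib transpose_mv_inner sum_mv scaleR_mv transpose_outer
        outer_mv inner_diff_right inner_sum_right p_def q_def inner_commute sum_negf transpose_neg neg_mv matrix_vector_mult_add_rdistrib inner_add_right mult_ac
        del: transpose_matrix_vector)
  have t3: "x \<bullet> (transpose Bi *v c) = (Bi *v x) \<bullet> c" by (rule transpose_mv_inner)
  have t4: "b \<bullet> ((Bi - (\<Sum>j<T. \<tau> j *\<^sub>R (- outer (w j) (xd j)))) *v x)
      = (Bi *v x) \<bullet> b + (\<Sum>j<T. \<tau> j * (p j * q j))"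
    by (simp add: matrix_vector_mult_diff_rdistrib sum_mv scaleR_mv neg_mv
        outer_mv inner_diff_right inner_sum_right p_def q_def inner_commute sum_negf mult_ac matrix_vector_mult_add_rdistrib inner_add_right)
  have t5: "b \<bullet> ((Ai - (\<Sum>j<T. \<tau> j *\<^sub>R outer (w j) (w j))) *v b)
      = b \<bullet> (Ai *v b) - (\<Sum>j<T. \<tau> j * (q j)\<^sup>2)"
    by (simp add: matrix_vector_mult_diff_rdistrib sum_mv scaleR_mv
        outer_mv inner_diff_right inner_sum_right q_def inner_commute power2_eq_square mult_ac)
  have t6: "c \<bullet> ((- Ai) *v c) = - (c \<bullet> (Ai *v c))" by (simp add: neg_mv)
  have sumpos: "(\<Sum>j<T. \<tau> j * (\<omega> * X - (p j)\<^sup>2 + 2 * (p j * q j) - (q j)\<^sup>2)) \<ge> 0"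
  proof (rule sum_nonneg)
    fix j assume "j \<in> {..<T}"
    then have jT: "j < T" by simp
    have "q j = x \<bullet> (Ms *v w j)"
      unfolding q_def b_def transpose_matrix_vector by (metis dot_lmul_matrix inner_commute)
    then have "q j = x \<bullet> xd j - x \<bullet> d j" using Msw jT by (simp add: inner_diff_right)
    then have pq: "p j - q j = d j \<bullet> x" by (simp add: p_def inner_commute)
    have "(d j \<bullet> x)\<^sup>2 \<le> (norm (d j) * norm x)\<^sup>2"
      using power_mono[OF Cauchy_Schwarz_ineq2[of "d j" x], of 2] by simp
    also have "\<dots> = (norm (d j))\<^sup>2 * X" by (simp add: X_def power_mult_distrib dot_square_norm)
    also have "\<dots> \<le> \<omega> * X" using dist jT by (intro mult_right_mono) (auto simp: X_def)
    finally have "(p j - q j)\<^sup>2 \<le> \<omega> * X" using pq by simp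
    then have "\<omega> * X - (p j)\<^sup>2 + 2 * (p j * q j) - (q j)\<^sup>2 \<ge> 0" by (simp add: power2_eq_square algebra_simps)
    then show "\<tau> j * (\<omega> * X - (p j)\<^sup>2 + 2 * (p j * q j) - (q j)\<^sup>2) \<ge> 0" using tau jT by simp
  qed
  have sumeq: "(\<Sum>j<T. \<tau> j * (\<omega> * X - (p j)\<^sup>2 + 2 * (p j * q j) - (q j)\<^sup>2))
     = - (\<Sum>j<T. \<tau> j * (- \<omega> * X + (p j)\<^sup>2)) + 2 * (\<Sum>j<T. \<tau> j * (p j * q j)) - (\<Sum>j<T. \<tau> j * (q j)\<^sup>2)"
    by (simp add: sum_distrib_left sum_subtractf sum.distrib algebra_simps flip: sum_negf)
  have csym: "c \<bullet> (Ai *v b) = b \<bullet> (Ai *v c)" using sym_inner[OF Ai_sym, of c b] by (simp add: inner_commute)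
  have ineq: "- X + 2 * ((Ai *v c) \<bullet> b) + b \<bullet> (Ai *v b) + c \<bullet> (Ai *v c) \<le> 0"
    using main t1 t2 t3 t4 t5 t6 sumpos sumeq Bc by (simp add: inner_commute) 
  have "(b + c) \<bullet> (Ai *v (b + c)) = b \<bullet> (Ai *v b) + 2 * ((Ai *v c) \<bullet> b) + c \<bullet> (Ai *v c)"
    using csym by (simp add: matrix_vector_right_distrib inner_add_left inner_add_right inner_commute)
  then show ?thesis using ineq by (simp add: b_def c_def X_def)
qed



lemma pos_scale_nonpos: "(c::real) > 0 \<Longrightarrow> P \<Longrightarrow> (P \<Longrightarrow> c * B \<le> 0) \<Longrightarrow> B \<le> 0"
  by (simp add: mult_le_0_iff)

lemma H_cons:
  fixes P :: "real^'p^'p" and Sq :: "real^'n^'n" and y :: "real^'p" and g :: "real^'n"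
  assumes eta: "\<eta> > 0"
    and H: "nsd (block3
          ((\<chi> _ _. H11) :: real^unit^unit)
          (transpose (col (\<eta> *\<^sub>R (P *v y))))
          (transpose (col (Sq *v g)))
          (col (\<eta> *\<^sub>R (P *v y)))
          ((- 2 * \<eta>) *\<^sub>R mat 1)
          0
          (col (Sq *v g))
          0
          ((- 2 * \<eta>) *\<^sub>R mat 1))"
    and Sqs: "symmetric_mat Sq" and SqSq: "Sq ** Sq = mat 1"
  shows "H11 + norm g * norm (P *v y) \<le> 0"
proof -
  define e :: "real^unit" where "e = (\<chi> _. 1)"
  define a where "a = (1/2) *\<^sub>R (P *v y)"
  define b where "b = (1/(2*\<eta>)) *\<^sub>R (Sq *v g)"
  define Y where "Y = (P *v y) \<bullet> (P *v y)"
  define G where "G = (Sq *v g) \<bullet> (Sq *v g)"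
  have "vconcat e (vconcat a b) \<bullet> ((block3
          ((\<chi> _ _. H11) :: real^unit^unit)
          (transpose (col (\<eta> *\<^sub>R (P *v y))))
          (transpose (col (Sq *v g)))
          (col (\<eta> *\<^sub>R (P *v y)))
          ((- 2 * \<eta>) *\<^sub>R mat 1)
          0
          (col (Sq *v g))
          0
          ((- 2 * \<eta>) *\<^sub>R mat 1)) *v vconcat e (vconcat a b)) \<le> 0"
    using H by (simp add: nsd_def)
  then have raw: "H11 * (\<eta> * (\<eta> * 8)) + (\<eta> * (4 * G) + \<eta> * (\<eta> * (\<eta> * (4 * Y)))) \<le> 0"
    using eta
    by (simp add: block3_quad tcol_mv col_mv unit_inner unit_mv e_def a_def b_def Y_def G_def
        scaleR_mv neg_mv matrix_vector_mult_scaleR inner_commute power2_eq_square field_simps del: transpose_matrix_vector)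
  have main: "H11 + \<eta> * Y / 2 + G / (2*\<eta>) \<le> 0"
  proof -
    have "(8*\<eta>^2) * (H11 + \<eta> * Y / 2 + G / (2*\<eta>)) = H11 * (\<eta> * (\<eta> * 8)) + (\<eta> * (4 * G) + \<eta> * (\<eta> * (\<eta> * (4 * Y))))"
      using eta by (simp add: field_simps power2_eq_square)
    then have "(8*\<eta>^2) * (H11 + \<eta> * Y / 2 + G / (2*\<eta>)) \<le> 0" using raw by simp
    then show ?thesis using eta by (simp add: mult_le_0_iff)
  qed
  have G: "G = (norm g)\<^sup>2"
    using sym_inner[OF Sqs, of g "Sq *v g"] SqSq
    by (simp add: G_def matrix_vector_mul_assoc dot_square_norm)
  have Y: "Y = (norm (P *v y))\<^sup>2" by (simp add: Y_def dot_square_norm)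
  have "0 \<le> (\<eta> * norm (P *v y) - norm g)\<^sup>2" by simp
  then have "2 * \<eta> * (norm g * norm (P *v y)) \<le> \<eta>\<^sup>2 * (norm (P *v y))\<^sup>2 + (norm g)\<^sup>2"
    by (simp add: power2_eq_square algebra_simps)
  then have "norm g * norm (P *v y) \<le> \<eta> * Y / 2 + G / (2*\<eta>)"
    using eta unfolding G Y by (simp add: field_simps power2_eq_square)
  then show ?thesis using main by simp
qed



lemma poly_diff: "poly_fun f \<Longrightarrow> f differentiable (at x)"
  by (induction rule: poly_fun.induct)
     (auto intro!: differentiable_add differentiable_mult bounded_linear_imp_differentiable bounded_linear_vec_nth)

lemma grad_inner:
  fixes f :: "real^'n \<Rightarrow> real"
  assumes "f differentiable (at x)"
  shows "frechet_derivative f (at x) v = grad f x \<bullet> v"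
proof -
  define D where "D = frechet_derivative f (at x)"
  have "(f has_derivative D) (at x)" using assms frechet_derivative_works D_def by blast
  then have lin: "linear D" using has_derivative_linear by blast
  have "D v = D (\<Sum>i\<in>UNIV. v $ i *\<^sub>R axis i 1)"
    using basis_expansion[of v] by (simp add: scalar_mult_eq_scaleR)
  also have "\<dots> = (\<Sum>i\<in>UNIV. v $ i * D (axis i 1))"
    by (simp add: linear_sum[OF lin] linear_scale[OF lin])
  also have "\<dots> = grad f x \<bullet> v"
    by (simp add: grad_def inner_vec_def D_def mult.commute)
  finally show ?thesis by (simp add: D_def)
qed

lemma invariance_lemma:
  fixes f :: "real^'n \<Rightarrow> real^'n" and h :: "real^'n \<Rightarrow> real"
  assumes hd: "\<And>x. h differentiable (at x)"
    and bound: "\<And>x. h x = 0 \<Longrightarrow> grad h x \<bullet> f x < 0"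
  shows "invariant f {x. h x \<le> 0}"
  unfolding invariant_def
proof (intro ballI allI impI)
  fix x0 Tm X t1
  assume x0: "x0 \<in> {x. h x \<le> 0}" and ms: "is_maximal_solution f x0 Tm X" and t1: "t1 \<in> sol_dom Tm"
  define D where "D = sol_dom Tm"
  have X0: "X 0 = x0" and Xd: "\<And>t. t \<in> D \<Longrightarrow> (X has_vector_derivative f (X t)) (at t within D)"
    using ms by (auto simp: is_maximal_solution_def is_solution_def D_def)
  define \<phi> where "\<phi> t = h (X t)" for t
  have deriv: "(\<phi> has_real_derivative (grad h (X t) \<bullet> f (X t))) (at t within D)" if tD: "t \<in> D" for t
  proof -
    have "(X has_derivative (\<lambda>s. s *\<^sub>R f (X t))) (at t within D)"
      using Xd[OF tD] by (simp add: has_vector_derivative_def)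
    moreover have "(h has_derivative frechet_derivative h (at (X t))) (at (X t))"
      using hd frechet_derivative_works by blast
    ultimately have "(\<phi> has_derivative (\<lambda>s. frechet_derivative h (at (X t)) (s *\<^sub>R f (X t)))) (at t within D)"
      unfolding \<phi>_def by (rule has_derivative_compose)
    moreover have "(\<lambda>s. frechet_derivative h (at (X t)) (s *\<^sub>R f (X t))) = (*) (grad h (X t) \<bullet> f (X t))"
      by (simp add: fun_eq_iff grad_inner[OF hd] mult.commute)
    ultimately show ?thesis unfolding has_field_derivative_def by simp
  qed
  have cont: "continuous_on D \<phi>" by (rule DERIV_continuous_on[OF deriv])
  have t1D: "0 \<le> t1" "ereal t1 < Tm" using t1 by (auto simp: sol_dom_def)
  have sub: "{0..t1} \<subseteq> D"
  proof
    fix t assume "t \<in> {0..t1}"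
    then have "0 \<le> t" "ereal t \<le> ereal t1" by auto
    moreover have "ereal t < Tm" using \<open>ereal t \<le> ereal t1\<close> t1D(2) by (rule order.strict_trans1)
    ultimately show "t \<in> D" unfolding D_def sol_dom_def by auto
  qed
  have cont1: "continuous_on {0..t1} \<phi>" using continuous_on_subset[OF cont sub] .
  show "X t1 \<in> {x. h x \<le> 0}"
  proof (rule ccontr)
    assume "X t1 \<notin> {x. h x \<le> 0}"
    then have pos: "\<phi> t1 > 0" by (simp add: \<phi>_def)
    define A where "A = {0..t1} \<inter> \<phi> -` {..0}"
    have "closed A" unfolding A_def by (rule continuous_closed_preimage[OF cont1]) auto
    moreover have "bounded A" unfolding A_def by (rule bounded_subset[of "{0..t1}"]) auto
    ultimately have "compact A" by (simp add: compact_eq_bounded_closed)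
    moreover have "0 \<in> A" using x0 X0 t1D by (simp add: A_def \<phi>_def)
    ultimately obtain s where sA: "s \<in> A" and smax: "\<And>t. t \<in> A \<Longrightarrow> t \<le> s"
      using continuous_attains_sup[of A "\<lambda>t. t"] by (auto intro: continuous_on_id)
    have s0: "0 \<le> s" "s \<le> t1" "\<phi> s \<le> 0" using sA by (auto simp: A_def)
    have st1: "s < t1" using s0 pos by (metis order.not_eq_order_implies_strict not_le)
    have phis: "\<phi> s = 0"
    proof (rule ccontr)
      assume "\<phi> s \<noteq> 0"
      then have "\<phi> s < 0" using s0 by simp
      moreover have "continuous_on {s..t1} \<phi>" using continuous_on_subset[OF cont1] s0 by auto
      ultimately obtain t where t: "t \<ge> s" "t \<le> t1" "\<phi> t = 0"
        using IVT'[of \<phi> s 0 t1] pos st1 by auto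
      then have "t \<in> A" using s0 by (simp add: A_def)
      then have "t = s" using smax t by force
      then show False using t \<open>\<phi> s < 0\<close> by simp
    qed
    have sD: "s \<in> D" using sub s0 by auto
    have "grad h (X s) \<bullet> f (X s) < 0" using bound phis by (simp add: \<phi>_def)
    then obtain d where d: "d > 0" and dec: "\<And>hh. hh > 0 \<Longrightarrow> s + hh \<in> D \<Longrightarrow> hh < d \<Longrightarrow> \<phi> s > \<phi> (s + hh)"
      using has_real_derivative_neg_dec_right[OF deriv[OF sD]] by blast
    define hh where "hh = min (d/2) (t1 - s)"
    have hh: "hh > 0" "hh < d" "s + hh \<le> t1" using d st1 by (auto simp: hh_def)
    then have "s + hh \<in> {0..t1}" using s0 by auto
    then have "s + hh \<in> D" using sub by auto
    then have "\<phi> (s + hh) < 0" using dec hh phis by fastforce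
    then have "s + hh \<in> A" using \<open>s + hh \<in> {0..t1}\<close> by (simp add: A_def)
    then show False using smax hh by fastforce
  qed
qed



theorem mainTheorem3:
  fixes Astar :: "real^'na^'n" and Bstar :: "real^'nb^'n"
    and Z :: "real^'n \<Rightarrow> real^'na" and W :: "real^'n \<Rightarrow> real^'m^'nb"
    and T :: nat and xs :: "nat \<Rightarrow> real^'n" and us :: "nat \<Rightarrow> real^'m"
    and xdot :: "nat \<Rightarrow> real^'n" and z :: "nat \<Rightarrow> real^'na" and v :: "nat \<Rightarrow> real^'nb"
    and d :: "nat \<Rightarrow> real^'n" and \<omega> \<epsilon> :: real
    and Ai :: "real^('na + 'nb)^('na + 'nb)" and Bi :: "real^'n^('na + 'nb)"
    and \<tau> :: "nat \<Rightarrow> real"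
    and \<l> \<eta> h :: "real^'n \<Rightarrow> real" and K :: "real^'n \<Rightarrow> real^'m"
  assumes Z_poly: "poly_vec Z" and W_poly: "poly_mat W"
    and data_z: "\<forall>j<T. z j = Z (xs j)"
    and data_v: "\<forall>j<T. v j = W (xs j) *v us j"
    and data_xdot: "\<forall>j<T. xdot j = Astar *v z j + Bstar *v v j + d j"
    and dist: "\<forall>j<T. (norm (d j))\<^sup>2 \<le> \<omega>"
    and \<omega>_nonneg: "\<omega> \<ge> 0"
    and \<epsilon>_pos: "\<epsilon> > 0"
    and Ai_sym: "symmetric_mat Ai"
    and LMI: "nsd (block3
        (- mat 1 - (\<Sum>j<T. \<tau> j *\<^sub>R (- \<omega> *\<^sub>R mat 1 + outer (xdot j) (xdot j))))
        (transpose Bi - (\<Sum>j<T. \<tau> j *\<^sub>R transpose (- outer (vconcat (z j) (v j)) (xdot j))))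
        (transpose Bi)
        (Bi - (\<Sum>j<T. \<tau> j *\<^sub>R (- outer (vconcat (z j) (v j)) (xdot j))))
        (Ai - (\<Sum>j<T. \<tau> j *\<^sub>R outer (vconcat (z j) (v j)) (vconcat (z j) (v j))))
        0
        Bi
        0
        (- Ai))"
    and Ai_pd: "pd Ai"
    and \<tau>_nonneg: "\<forall>j<T. \<tau> j \<ge> 0"
    and \<l>_poly: "poly_fun \<l>" and \<eta>_poly: "poly_fun \<eta>" and h_poly: "poly_fun h"
    and K_poly: "poly_vec K"
    and \<eta>_pos: "\<forall>x. \<eta> x > 0"
    and H_nsd: "\<forall>x. let \<zeta> = - (matrix_inv Ai ** Bi); P = psd_sqrt (matrix_inv Ai);
                      Q = (mat 1 :: real^'n^'n);
                      y = vconcat (Z x) (W x *v K x) in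
        nsd (block3
          ((\<chi> _ _. \<l> x * h x + \<epsilon> + grad h x \<bullet> (transpose \<zeta> *v y)) :: real^unit^unit)
          (transpose (col (\<eta> x *\<^sub>R (P *v y))))
          (transpose (col (psd_sqrt Q *v grad h x)))
          (col (\<eta> x *\<^sub>R (P *v y)))
          ((- 2 * \<eta> x) *\<^sub>R mat 1)
          0
          (col (psd_sqrt Q *v grad h x))
          0
          ((- 2 * \<eta> x) *\<^sub>R mat 1))"
  shows "invariant (\<lambda>x. Astar *v Z x + Bstar *v (W x *v K x)) {x. h x \<le> 0}"

proof -
  define Ms :: "real^('na+'nb)^'n" where "Ms = (\<chi> i k. case k of Inl a \<Rightarrow> Astar $ i $ a | Inr b \<Rightarrow> Bstar $ i $ b)"
  define Ainv where "Ainv = matrix_inv Ai"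
  have "\<forall>x. Ai *v x = 0 \<longrightarrow> x = 0"
  proof (intro allI impI)
    fix x assume "Ai *v x = 0"
    then have "x \<bullet> (Ai *v x) = 0" by simp
    then show "x = 0" using Ai_pd unfolding pd_def by (metis less_irrefl)
  qed
  then have "\<exists>B. B ** Ai = mat 1" by (simp only: matrix_left_invertible_ker)
  then have "invertible Ai" by (simp only: invertible_left_inverse)
  then have "Ai ** Ainv = mat 1 \<and> Ainv ** Ai = mat 1"
    unfolding Ainv_def matrix_inv_def invertible_def by (rule someI_ex)
  then have AI1: "Ai ** Ainv = mat 1" and AI2: "Ainv ** Ai = mat 1" by auto
  have AA: "Ai *v (Ainv *v y) = y" for y
  proof -
    have "Ai *v (Ainv *v y) = (Ai ** Ainv) *v y" by (rule matrix_vector_mul_assoc)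
    then show ?thesis by (simp add: AI1)
  qed
  have AA2: "Ainv *v (Ai *v y) = y" for y
  proof -
    have "Ainv *v (Ai *v y) = (Ainv ** Ai) *v y" by (rule matrix_vector_mul_assoc)
    then show ?thesis by (simp add: AI2)
  qed
  have Ainv_sym: "symmetric_mat Ainv"
  proof (rule symI)
    fix x y
    have "(Ainv *v x) \<bullet> y = (Ainv *v x) \<bullet> (Ai *v (Ainv *v y))" by (simp add: AA)
    also have "\<dots> = (Ai *v (Ainv *v x)) \<bullet> (Ainv *v y)" by (simp add: sym_inner[OF Ai_sym])
    also have "\<dots> = x \<bullet> (Ainv *v y)" by (simp add: AA)
    finally show "(Ainv *v x) \<bullet> y = x \<bullet> (Ainv *v y)" .
  qed
  have Ainv_psd: "psd Ainv"
    unfolding psd_def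
  proof
    fix v
    have "v \<bullet> (Ainv *v v) = (Ainv *v v) \<bullet> (Ai *v (Ainv *v v))" by (simp add: AA inner_commute)
    also have "\<dots> \<ge> 0"
    proof (cases "Ainv *v v = 0")
      case True then show ?thesis by simp
    next
      case False
      then have "(Ainv *v v) \<bullet> (Ai *v (Ainv *v v)) > 0" using Ai_pd unfolding pd_def by blast
      then show ?thesis by simp
    qed
    finally show "v \<bullet> (Ainv *v v) \<ge> 0" .
  qed
  define P where "P = psd_sqrt Ainv"
  have Psym: "symmetric_mat P" and PP: "P ** P = Ainv"
    using psd_sqrt_props[OF Ainv_sym Ainv_psd] by (auto simp: P_def)
  define Sq where "Sq = psd_sqrt (mat 1 :: real^'n^'n)"
  have "symmetric_mat (mat 1 :: real^'n^'n)" by (simp add: symmetric_mat_def)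
  moreover have "psd (mat 1 :: real^'n^'n)" by (simp add: psd_def)
  ultimately have Sqsym: "symmetric_mat Sq" and SqSq: "Sq ** Sq = mat 1"
    using psd_sqrt_props by (auto simp: Sq_def)
  have Msw: "\<forall>j<T. Ms *v vconcat (z j) (v j) = xdot j - d j"
  proof (intro allI impI)
    fix j assume jT: "j < T"
    have "Ms *v vconcat (z j) (v j) = Astar *v z j + Bstar *v v j" unfolding Ms_def by (rule Ms_mv)
    then show "Ms *v vconcat (z j) (v j) = xdot j - d j" using data_xdot jT by simp
  qed
  have LC: "\<And>x. (transpose Ms *v x + Ainv *v (Bi *v x)) \<bullet> (Ai *v (transpose Ms *v x + Ainv *v (Bi *v x))) \<le> x \<bullet> x"
    by (rule LMI_cons[OF Ai_sym LMI \<tau>_nonneg Msw dist AA])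
  have hd: "\<And>x. h differentiable (at x)" using poly_diff[OF h_poly] .
  have fMs: "Astar *v Z x + Bstar *v (W x *v K x) = Ms *v vconcat (Z x) (W x *v K x)" for x
    unfolding Ms_def by (rule Ms_mv[symmetric])
  show ?thesis
  proof (rule invariance_lemma[OF hd])
    fix x assume hx: "h x = 0"
    define y where "y = vconcat (Z x) (W x *v K x)"
    define g where "g = grad h x"
    define zb where "zb = - (matrix_inv Ai ** Bi)"
    define H11 where "H11 = \<l> x * h x + \<epsilon> + g \<bullet> (transpose zb *v y)"
    have "nsd (block3
          ((\<chi> _ _. H11) :: real^unit^unit)
          (transpose (col (\<eta> x *\<^sub>R (P *v y))))
          (transpose (col (Sq *v g)))
          (col (\<eta> x *\<^sub>R (P *v y)))
          ((- 2 * \<eta> x) *\<^sub>R mat 1)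
          0
          (col (Sq *v g))
          0
          ((- 2 * \<eta> x) *\<^sub>R mat 1))"
      using H_nsd[rule_format, of x] unfolding Let_def H11_def zb_def P_def Ainv_def Sq_def y_def g_def .
    then have Hb: "H11 + norm g * norm (P *v y) \<le> 0"
      using H_cons[OF \<eta>_pos[rule_format, of x] _ Sqsym SqSq] by blast
    define u where "u = transpose Ms *v g + Ainv *v (Bi *v g)"
    have zbg: "zb *v g = - (Ainv *v (Bi *v g))"
      by (simp add: zb_def Ainv_def neg_mv matrix_vector_mul_assoc)
    have H11e: "H11 = \<l> x * h x + \<epsilon> - (Ainv *v (Bi *v g)) \<bullet> y"
      unfolding H11_def by (simp add: transpose_mv_inner zbg del: transpose_matrix_vector)
    have gf: "g \<bullet> (Ms *v y) = u \<bullet> y - (Ainv *v (Bi *v g)) \<bullet> y"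
    proof -
      have "g \<bullet> (Ms *v y) = y \<bullet> (transpose Ms *v g)"
        by (simp add: transpose_mv_inner inner_commute del: transpose_matrix_vector)
      also have "\<dots> = y \<bullet> (u - Ainv *v (Bi *v g))" by (simp add: u_def)
      finally show ?thesis by (simp add: inner_diff_right inner_commute)
    qed
    have PPu: "P *v (P *v (Ai *v u)) = u"
    proof -
      have "P *v (P *v (Ai *v u)) = (P ** P) *v (Ai *v u)" by (rule matrix_vector_mul_assoc)
      then show ?thesis by (simp add: PP AA2)
    qed
    have uy: "u \<bullet> y = (P *v y) \<bullet> (P *v (Ai *v u))"
    proof -
      have "u \<bullet> y = (P *v (P *v (Ai *v u))) \<bullet> y" by (simp add: PPu)
      also have "\<dots> = (P *v (Ai *v u)) \<bullet> (P *v y)" by (rule sym_inner[OF Psym])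
      finally show ?thesis by (simp add: inner_commute)
    qed
    have "(norm (P *v (Ai *v u)))\<^sup>2 = (P *v (Ai *v u)) \<bullet> (P *v (Ai *v u))" by (simp add: dot_square_norm)
    also have "\<dots> = (Ai *v u) \<bullet> (P *v (P *v (Ai *v u)))" by (rule sym_inner[OF Psym])
    also have "\<dots> = u \<bullet> (Ai *v u)" by (simp add: PPu inner_commute)
    also have "\<dots> \<le> g \<bullet> g" using LC[of g] by (simp add: u_def)
    also have "\<dots> = (norm g)\<^sup>2" by (simp add: dot_square_norm)
    finally have sq: "(norm (P *v (Ai *v u)))\<^sup>2 \<le> (norm g)\<^sup>2" .
    have "norm (P *v (Ai *v u)) \<le> norm g" using power2_le_imp_le[OF sq] by simp
    then have "norm (P *v y) * norm (P *v (Ai *v u)) \<le> norm (P *v y) * norm g"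
      by (rule mult_left_mono) simp
    then have "u \<bullet> y \<le> norm (P *v y) * norm g"
      using uy norm_cauchy_schwarz[of "P *v y" "P *v (Ai *v u)"] by linarith
    then have "g \<bullet> (Ms *v y) + \<l> x * h x + \<epsilon> \<le> 0"
      using Hb H11e gf by (simp add: mult.commute)
    then show "grad h x \<bullet> (Astar *v Z x + Bstar *v (W x *v K x)) < 0"
      using hx \<epsilon>_pos by (simp add: fMs g_def y_def)
  qed
qed


end
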